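(* For $n\ge 1$ and all $k\ge 0$, $$P^+(n+1,k)=(n-2k)S(n,k),\qquad P^-(n+1,k)=(1+k)S(n,k).$$ Equivalently, $P_{n+1}^+(x)=nS_n(x)-2xS_n'(x)$ and $P_{n+1}^-(x)=S_n(x)+xS_n'(x)$.
   Context: For a permutation $\pi$ of $[n]=\{1,\dots,n\}$, ${\rm des}(\pi)=\#\{i\in[n-1]:\pi(i)>\pi(i+1)\}$. A double descent is an index $i\in[n-2]$ with $\pi(i)>\pi(i+1)>\pi(i+2)$; $\pi$ is simsun if for every $k\in[n]$ the subword of $\pi$ consisting of the letters in $[k]$ (in order of appearance) has no double descents. Let $\mathcal{RS}_n$ be the set of simsun permutations of $[n]$, $S(n,k)=\#\{\pi\in\mathcal{RS}_n:{\rm des}(\pi)=k\}$, $S_n(x)=\sum_kS(n,k)x^k$. Let $\mathcal{RS}_n^+=\{\pi\in\mathcal{RS}_n:\pi(1)>\pi(2)\}$ and $\mathcal{RS}_n^-=\{\pi\in\mathcal{RS}_n:\pi(1)<\pi(2)\}$. An interior peak of $\pi$ is an index $i\in\{2,\dots,n-1\}$ with $\pi(i-1)<\pi(i)>\pi(i+1)$, and ${\rm pk}(\pi)$ is their number. Let $P^{\pm}(n,k)=\#\{\pi\in\mathcal{RS}_n^{\pm}:{\rm pk}(\pi)=k\}$ and $P_n^{\pm}(x)=\sum_k P^{\pm}(n,k)x^k$. *)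

theory Defs
  imports "HOL-Combinatorics.Multiset_Permutations"
begin

text \<open>Permutations of [n] are represented in one-line notation as lists
  (0-based list indices): xs ! i is the value pi(i+1).\<close>

definition des :: "nat list \<Rightarrow> nat" where
  "des xs = card {i. i + 1 < length xs \<and> xs ! i > xs ! (i + 1)}"

definition has_double_descent :: "nat list \<Rightarrow> bool" where
  "has_double_descent xs \<longleftrightarrow>
     (\<exists>i. i + 2 < length xs \<and> xs ! i > xs ! (i + 1) \<and> xs ! (i + 1) > xs ! (i + 2))"

definition simsun :: "nat \<Rightarrow> nat list \<Rightarrow> bool" where
  "simsun n xs \<longleftrightarrow> (\<forall>k\<in>{1..n}. \<not> has_double_descent (filter (\<lambda>x. x \<le> k) xs))"

definition RS :: "nat \<Rightarrow> nat list set" where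
  "RS n = {xs \<in> permutations_of_set {1..n}. simsun n xs}"

definition RS_plus :: "nat \<Rightarrow> nat list set" where
  "RS_plus n = {xs \<in> RS n. xs ! 0 > xs ! 1}"

definition RS_minus :: "nat \<Rightarrow> nat list set" where
  "RS_minus n = {xs \<in> RS n. xs ! 0 < xs ! 1}"

text \<open>Interior peaks: positions 2..n-1 in 1-based indexing, i.e. 1..n-2 0-based.\<close>
definition pk :: "nat list \<Rightarrow> nat" where
  "pk xs = card {i. 0 < i \<and> i + 1 < length xs \<and> xs ! (i - 1) < xs ! i \<and> xs ! i > xs ! (i + 1)}"

definition S :: "nat \<Rightarrow> nat \<Rightarrow> nat" where
  "S n k = card {xs \<in> RS n. des xs = k}"

definition P_plus :: "nat \<Rightarrow> nat \<Rightarrow> nat" where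
  "P_plus n k = card {xs \<in> RS_plus n. pk xs = k}"

definition P_minus :: "nat \<Rightarrow> nat \<Rightarrow> nat" where
  "P_minus n k = card {xs \<in> RS_minus n. pk xs = k}"

end

theory Submission
  imports Defs
begin


definition ins :: "nat \<Rightarrow> nat list \<Rightarrow> nat \<Rightarrow> nat list" where
  "ins M xs j = take j xs @ M # drop j xs"

definition Dset :: "nat list \<Rightarrow> nat set" where
  "Dset xs = {i. i + 1 < length xs \<and> xs ! i > xs ! (i + 1)}"

lemma ins_length[simp]: "j \<le> length xs \<Longrightarrow> length (ins M xs j) = Suc (length xs)"
  by (simp add: ins_def)

lemma ins_nth: "j \<le> length xs \<Longrightarrow>
  ins M xs j ! i = (if i < j then xs ! i else if i = j then M else xs ! (i - 1))"
proof -
  assume j: "j \<le> length xs"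
  have lt: "length (take j xs) = j" using j by simp
  show ?thesis
  proof (cases "i < j")
    case True thus ?thesis using lt by (simp add: ins_def nth_append)
  next
    case False
    hence "ins M xs j ! i = (M # drop j xs) ! (i - j)" using lt by (simp add: ins_def nth_append)
    also have "\<dots> = (if i = j then M else xs ! (i - 1))"
      using False j by (auto simp: nth_Cons' nth_drop)
    finally show ?thesis using False by simp
  qed
qed

lemma ins_set[simp]: "set (ins M xs j) = insert M (set xs)"
proof -
  have "set xs = set (take j xs) \<union> set (drop j xs)" by (metis append_take_drop_id set_append)
  thus ?thesis by (auto simp: ins_def)
qed

lemma ins_distinct: assumes "distinct xs" "M \<notin> set xs" shows "distinct (ins M xs j)"
proof -
  have "distinct (take j xs @ drop j xs)" using assms by simp
  moreover have "set xs = set (take j xs) \<union> set (drop j xs)" by (metis append_take_drop_id set_append)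
  ultimately show ?thesis using assms by (auto simp: ins_def simp del: append_take_drop_id)
qed

lemma filter_ins: assumes "\<not> P M" shows "filter P (ins M xs j) = filter P xs"
proof -
  have "filter P (ins M xs j) = filter P (take j xs @ drop j xs)" by (simp add: assms ins_def del: append_take_drop_id)
  thus ?thesis by simp
qed

lemma des_card: "des xs = card (Dset xs)"
  by (simp add: des_def Dset_def)

lemma Dset_fin[simp]: "finite (Dset xs)"
  by (rule finite_subset[of _ "{..<length xs}"]) (auto simp: Dset_def)

lemma nodd: "\<not> has_double_descent xs \<Longrightarrow> i \<in> Dset xs \<Longrightarrow> Suc i \<notin> Dset xs"
  by (auto simp: has_double_descent_def Dset_def)

lemma RS_props:
  assumes "xs \<in> RS m" "m \<ge> 1"
  shows "set xs = {1..m}" "distinct xs" "length xs = m" "\<not> has_double_descent xs"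
proof -
  show s: "set xs = {1..m}" "distinct xs" using assms by (auto simp: RS_def permutations_of_set_def)
  thus "length xs = m" using distinct_card by fastforce
  have "filter (\<lambda>x. x \<le> m) xs = xs" using s by (auto simp: filter_id_conv)
  moreover have "\<not> has_double_descent (filter (\<lambda>x. x \<le> m) xs)"
    using assms by (auto simp: RS_def simsun_def)
  ultimately show "\<not> has_double_descent xs" by simp
qed

lemma ins_nodd:
  assumes nd: "\<not> has_double_descent xs" and j: "j \<le> length xs" "j \<notin> Dset xs"
    and lt: "\<forall>x\<in>set xs. x < M"
  shows "\<not> has_double_descent (ins M xs j)"
proof
  assume "has_double_descent (ins M xs j)"
  then obtain i where i: "i + 2 < Suc (length xs)" "ins M xs j ! i > ins M xs j ! (i+1)"
     "ins M xs j ! (i+1) > ins M xs j ! (i+2)"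
    using j by (auto simp: has_double_descent_def)
  have ltk: "\<And>k. k < length xs \<Longrightarrow> xs ! k < M" using lt by auto
  consider "i + 2 < j" | "i + 2 = j" | "i + 1 = j" | "i = j" | "i > j" by linarith
  thus False
  proof cases
    case 1
    hence "xs ! i > xs ! (i+1)" "xs ! (i+1) > xs ! (i+2)" using i j by (auto simp: ins_nth)
    thus False using nd 1 j by (auto simp: has_double_descent_def)
  next
    case 2 thus False using i j ltk[of "Suc i"] by (auto simp: ins_nth)
  next
    case 3 thus False using i j ltk[of i] by (auto simp: ins_nth)
  next
    case 4
    hence "xs ! j > xs ! (j+1)" "j + 1 < length xs" using i j by (auto simp: ins_nth)
    thus False using j by (auto simp: Dset_def)
  next
    case 5
    hence "xs ! (i-1) > xs ! i" "xs ! i > xs ! (i+1)" using i j by (auto simp: ins_nth)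
    moreover have "(i - 1) + 2 < length xs" "i - 1 + 1 = i" "i - 1 + 2 = i + 1" using 5 i by auto
    ultimately show False using nd unfolding has_double_descent_def by metis
  qed
qed

lemma ins_dd_imp:
  assumes nd: "\<not> has_double_descent (ins M xs j)" and j: "j \<le> length xs"
    and lt: "\<forall>x\<in>set xs. x < M"
  shows "j \<notin> Dset xs"
proof
  assume "j \<in> Dset xs"
  hence a: "j + 1 < length xs" "xs ! j > xs ! (j+1)" by (auto simp: Dset_def)
  have "xs ! j < M" using lt a by auto
  hence "ins M xs j ! j > ins M xs j ! (j+1)" "ins M xs j ! (j+1) > ins M xs j ! (j+2)"
    using a j by (auto simp: ins_nth)
  thus False using nd a j by (auto simp: has_double_descent_def)
qed

lemma filter_le_id: "\<forall>x\<in>set xs. x \<le> k \<Longrightarrow> filter (\<lambda>x. x \<le> k) xs = xs"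
  by (simp add: filter_id_conv)

lemma ins_RS:
  assumes xs: "xs \<in> RS m" and m: "m \<ge> 1" and j: "j \<le> m" "j \<notin> Dset xs"
  shows "ins (Suc m) xs j \<in> RS (Suc m)"
proof -
  note p = RS_props[OF xs m]
  have lt: "\<forall>x\<in>set xs. x < Suc m" using p by auto
  have perm: "ins (Suc m) xs j \<in> permutations_of_set {1..Suc m}"
    using p lt by (intro permutations_of_setI) (auto intro: ins_distinct)
  have "simsun (Suc m) (ins (Suc m) xs j)"
    unfolding simsun_def
  proof
    fix k assume k: "k \<in> {1..Suc m}"
    show "\<not> has_double_descent (filter (\<lambda>x. x \<le> k) (ins (Suc m) xs j))"
    proof (cases "k = Suc m")
      case True
      have "filter (\<lambda>x. x \<le> k) (ins (Suc m) xs j) = ins (Suc m) xs j"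
        using True p by (intro filter_le_id) auto
      thus ?thesis using ins_nodd[OF p(4) _ j(2) lt] j p by simp
    next
      case False
      hence "filter (\<lambda>x. x \<le> k) (ins (Suc m) xs j) = filter (\<lambda>x. x \<le> k) xs"
        using k by (intro filter_ins) auto
      thus ?thesis using xs k False by (auto simp: RS_def simsun_def)
    qed
  qed
  thus ?thesis using perm by (simp add: RS_def)
qed

lemma RS_Suc_eq:
  assumes m: "m \<ge> 1"
  shows "RS (Suc m) = (\<lambda>(xs,j). ins (Suc m) xs j) ` (SIGMA xs:RS m. {j. j \<le> m \<and> j \<notin> Dset xs})"
proof
  show "(\<lambda>(xs,j). ins (Suc m) xs j) ` (SIGMA xs:RS m. {j. j \<le> m \<and> j \<notin> Dset xs}) \<subseteq> RS (Suc m)"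
    using ins_RS[OF _ m] by auto
next
  show "RS (Suc m) \<subseteq> (\<lambda>(xs,j). ins (Suc m) xs j) ` (SIGMA xs:RS m. {j. j \<le> m \<and> j \<notin> Dset xs})"
  proof
    fix s assume s: "s \<in> RS (Suc m)"
    have ss: "set s = {1..Suc m}" "distinct s" using s by (auto simp: RS_def permutations_of_set_def)
    have "Suc m \<in> set s" using ss by simp
    then obtain u v where uv: "s = u @ Suc m # v" using split_list by metis
    define xs where "xs = u @ v"
    have ins: "ins (Suc m) xs (length u) = s" by (simp add: ins_def xs_def uv)
    have nM: "Suc m \<notin> set xs" using ss uv xs_def by auto
    have "set xs = set s - {Suc m}" using uv nM unfolding xs_def by auto
    also have "\<dots> = {1..m}" using ss by auto
    finally have sx: "set xs = {1..m}" .
    have dx: "distinct xs" using ss uv xs_def by auto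
    have lx: "length xs = m" using sx dx distinct_card by fastforce
    have lu: "length u \<le> m" using lx xs_def by simp
    have sim: "simsun m xs"
      unfolding simsun_def
    proof
      fix k assume k: "k \<in> {1..m}"
      have "filter (\<lambda>x. x \<le> k) s = filter (\<lambda>x. x \<le> k) xs"
        using k ins filter_ins[of "\<lambda>x. x \<le> k" "Suc m" xs "length u"] by auto
      moreover have "\<not> has_double_descent (filter (\<lambda>x. x \<le> k) s)" using s k by (auto simp: RS_def simsun_def)
      ultimately show "\<not> has_double_descent (filter (\<lambda>x. x \<le> k) xs)" by simp
    qed
    have xsR: "xs \<in> RS m" using sx dx sim by (auto simp: RS_def permutations_of_set_def)
    have "filter (\<lambda>x. x \<le> Suc m) s = s" using ss by (intro filter_le_id) auto
    moreover have "\<not> has_double_descent (filter (\<lambda>x. x \<le> Suc m) s)" using s by (simp add: RS_def simsun_def)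
    ultimately have "\<not> has_double_descent s" by simp
    hence "length u \<notin> Dset xs" using ins_dd_imp[of "Suc m" xs "length u"] ins lx lu sx by auto
    thus "s \<in> (\<lambda>(xs,j). ins (Suc m) xs j) ` (SIGMA xs:RS m. {j. j \<le> m \<and> j \<notin> Dset xs})"
      using xsR lu ins by (intro image_eqI[of _ _ "(xs, length u)"]) auto
  qed
qed

lemma ins_inj:
  assumes m: "m \<ge> 1"
  shows "inj_on (\<lambda>(xs,j). ins (Suc m) xs j) (SIGMA xs:RS m. {j. j \<le> m \<and> j \<notin> Dset xs})"
proof (rule inj_onI, clarify)
  fix xs j ys i
  assume a: "xs \<in> RS m" "j \<le> m" "ys \<in> RS m" "i \<le> m" "ins (Suc m) xs j = ins (Suc m) ys i"
  note px = RS_props[OF a(1) m] and py = RS_props[OF a(3) m]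
  have "Suc m \<notin> set (take j xs)" "Suc m \<notin> set (drop j xs)"
    using px by (auto dest: in_set_takeD in_set_dropD)
  hence "take j xs = take i ys \<and> drop j xs = drop i ys"
    using append_Cons_eq_iff a(5) unfolding ins_def by metis
  moreover have "length (take j xs) = j" "length (take i ys) = i" using a px py by auto
  ultimately show "xs = ys \<and> j = i" by (metis append_take_drop_id)
qed



definition pset :: "nat list \<Rightarrow> nat set" where
  "pset xs = {i. 0 < i \<and> i + 1 < length xs \<and> xs ! (i - 1) < xs ! i \<and> xs ! i > xs ! (i + 1)}"

lemma pk_pset: "pk xs = card (pset xs)" by (simp add: pk_def pset_def)

lemma pset_fin[simp]: "finite (pset xs)"
  by (rule finite_subset[of _ "{..<length xs}"]) (auto simp: pset_def)

lemma pset_D: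
  assumes d: "distinct xs" and nd: "\<not> has_double_descent xs"
  shows "pset xs = Dset xs - {0}"
proof
  show "pset xs \<subseteq> Dset xs - {0}" by (auto simp: pset_def Dset_def)
next
  show "Dset xs - {0} \<subseteq> pset xs"
  proof
    fix i assume i: "i \<in> Dset xs - {0}"
    then obtain h where h: "i = Suc h" by (cases i) auto
    have "Suc h \<in> Dset xs" using i h by simp
    hence "h \<notin> Dset xs" using nodd[OF nd] by blast
    moreover have "h + 1 < length xs" "xs ! h \<noteq> xs ! (h+1)" using i h d by (auto simp: Dset_def nth_eq_iff_index_eq)
    ultimately have "xs ! h < xs ! (h+1)" by (auto simp: Dset_def)
    thus "i \<in> pset xs" using i h by (auto simp: pset_def Dset_def)
  qed
qed

lemma pset_ins_iff:
  assumes j: "j \<le> length xs" and lt: "\<forall>x\<in>set xs. x < M"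
  shows "i \<in> pset (ins M xs j) \<longleftrightarrow>
     (i + 1 < j \<and> i \<in> pset xs) \<or> (j + 1 < i \<and> i - 1 \<in> pset xs) \<or> (i = j \<and> 0 < j \<and> j < length xs)"
proof -
  have ltk: "\<And>k. k < length xs \<Longrightarrow> xs ! k < M" using lt by auto
  consider "i + 1 < j" | "i + 1 = j" | "i = j" | "i = j + 1" | "j + 1 < i" by linarith
  thus ?thesis
  proof cases
    case 1 thus ?thesis using j by (auto simp: pset_def ins_nth)
  next
    case 2 thus ?thesis using j ltk[of i] by (auto simp: pset_def ins_nth)
  next
    case 3 thus ?thesis using j ltk[of j] ltk[of "j-1"] by (auto simp: pset_def ins_nth)
  next
    case 4 thus ?thesis using j ltk[of j] by (auto simp: pset_def ins_nth)
  next
    case 5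
    have e: "i - 1 - 1 = i - 2" "i - 1 + 1 = i" using 5 by auto
    show ?thesis using 5 j by (auto simp: pset_def ins_nth e)
  qed
qed

lemma pk_ins:
  assumes d: "distinct xs" and nd: "\<not> has_double_descent xs" and j: "j \<le> length xs" "j \<notin> Dset xs"
    and lt: "\<forall>x\<in>set xs. x < M"
  shows "pk (ins M xs j) + (if 2 \<le> j \<and> j - 1 \<in> Dset xs then 1 else 0)
         = pk xs + (if 0 < j \<and> j < length xs then 1 else 0)"
proof -
  define P where "P = pset xs"
  define A1 where "A1 = {i\<in>P. i + 1 < j}"
  define A2 where "A2 = {i\<in>P. j < i}"
  define A3 where "A3 = (if 0 < j \<and> j < length xs then {j} else {})"
  define A4 where "A4 = (if 2 \<le> j \<and> j - 1 \<in> Dset xs then {j - 1} else {})"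
  have PD: "P = Dset xs - {0}" using pset_D[OF d nd] P_def by simp
  have Q: "pset (ins M xs j) = A1 \<union> Suc ` A2 \<union> A3"
  proof (rule set_eqI)
    fix i
    have "i \<in> Suc ` A2 \<longleftrightarrow> j + 1 < i \<and> i - 1 \<in> P"
      unfolding A2_def by (cases i) auto
    thus "i \<in> pset (ins M xs j) \<longleftrightarrow> i \<in> A1 \<union> Suc ` A2 \<union> A3"
      using pset_ins_iff[OF j(1) lt, of i] unfolding A1_def A3_def P_def by auto
  qed
  have P: "P = A1 \<union> A2 \<union> A4"
  proof (rule set_eqI)
    fix i
    show "i \<in> P \<longleftrightarrow> i \<in> A1 \<union> A2 \<union> A4"
    proof (cases "i + 1 < j \<or> j < i \<or> i = j")
      case True thus ?thesis using j(2) unfolding PD A1_def A2_def A4_def by auto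
    next
      case False
      hence e: "i = j - 1" "j \<ge> 1" by auto
      show ?thesis using j(2) unfolding PD A1_def A2_def A4_def e by (cases "j = 1") auto
    qed
  qed
  have fP: "finite P" by (simp add: P_def)
  have f: "finite A1" "finite A2" "finite A3" "finite A4"
    using fP by (auto simp: A1_def A2_def A3_def A4_def)
  have c2: "card (Suc ` A2) = card A2" by (simp add: card_image)
  have "card (A1 \<union> Suc ` A2) = card A1 + card (Suc ` A2)"
    using f by (intro card_Un_disjoint) (auto simp: A1_def A2_def)
  moreover have "card (A1 \<union> Suc ` A2 \<union> A3) = card (A1 \<union> Suc ` A2) + card A3"
    using f by (intro card_Un_disjoint) (auto simp: A1_def A2_def A3_def)
  ultimately have "card (pset (ins M xs j)) = card A1 + card A2 + card A3"
    unfolding Q c2 by simp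
  moreover have "card P = card A1 + card A2 + card A4"
  proof -
    have "card (A1 \<union> A2) = card A1 + card A2"
      using f by (intro card_Un_disjoint) (auto simp: A1_def A2_def)
    moreover have "card (A1 \<union> A2 \<union> A4) = card (A1 \<union> A2) + card A4"
      using f by (intro card_Un_disjoint) (auto simp: A1_def A2_def A4_def)
    ultimately show ?thesis using P by simp
  qed
  moreover have "card A3 = (if 0 < j \<and> j < length xs then 1 else 0)" by (simp add: A3_def)
  moreover have "card A4 = (if 2 \<le> j \<and> j - 1 \<in> Dset xs then 1 else 0)" by (simp add: A4_def)
  ultimately show ?thesis by (simp add: pk_pset P_def)
qed

lemma sign_ins:
  assumes j: "j \<le> length xs" and l2: "2 \<le> length xs" and lt: "\<forall>x\<in>set xs. x < M"
  shows "(ins M xs j ! 0 < ins M xs j ! 1) \<longleftrightarrow> (j = 1 \<or> (2 \<le> j \<and> xs ! 0 < xs ! 1))"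
    and "(ins M xs j ! 0 > ins M xs j ! 1) \<longleftrightarrow> (j = 0 \<or> (2 \<le> j \<and> xs ! 0 > xs ! 1))"
proof -
  have "0 < length xs" "1 < length xs" using l2 by auto
  hence "xs ! 0 \<in> set xs" "xs ! 1 \<in> set xs" by (auto intro!: nth_mem simp del: nth_mem)
  hence l0: "xs ! 0 < M" "xs ! 1 < M" using lt by auto
  consider "j = 0" | "j = 1" | "2 \<le> j" by linarith
  hence "((ins M xs j ! 0 < ins M xs j ! 1) \<longleftrightarrow> (j = 1 \<or> (2 \<le> j \<and> xs ! 0 < xs ! 1))) \<and>
    ((ins M xs j ! 0 > ins M xs j ! 1) \<longleftrightarrow> (j = 0 \<or> (2 \<le> j \<and> xs ! 0 > xs ! 1)))"
    by cases (use j l0 in \<open>auto simp: ins_nth\<close>)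
  thus "(ins M xs j ! 0 < ins M xs j ! 1) \<longleftrightarrow> (j = 1 \<or> (2 \<le> j \<and> xs ! 0 < xs ! 1))"
    and "(ins M xs j ! 0 > ins M xs j ! 1) \<longleftrightarrow> (j = 0 \<or> (2 \<le> j \<and> xs ! 0 > xs ! 1))" by auto
qed

lemma count_G:
  assumes d: "distinct xs" and nd: "\<not> has_double_descent xs" and lt: "\<forall>x\<in>set xs. x < M"
    and m: "length xs = m" and b: "1 \<le> b" "b \<le> m" "b - 1 \<notin> Dset xs"
  shows "int (card {j. b \<le> j \<and> j \<le> m \<and> j \<notin> Dset xs \<and> pk (ins M xs j) = k}) =
     (if k = pk xs then 1 + int (card {i \<in> Dset xs. b \<le> i}) else 0)
   + (if k = pk xs + 1 then int m - int b - 2 * int (card {i \<in> Dset xs. b \<le> i}) else 0)"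
proof -
  define D where "D = Dset xs"
  define p where "p = pk xs"
  define E where "E = {i \<in> D. b \<le> i}"
  define Y where "Y = {j. b \<le> j \<and> j < m \<and> j - 1 \<in> D}"
  define X where "X = {j. b \<le> j \<and> j < m \<and> j \<notin> D \<and> j - 1 \<notin> D}"
  define T where "T = {j. b \<le> j \<and> j \<le> m \<and> j \<notin> D}"
  have Dlt: "\<And>i. i \<in> D \<Longrightarrow> i + 1 < m" using m by (auto simp: D_def Dset_def)
  have YnD: "\<And>j. j \<in> Y \<Longrightarrow> j \<notin> D"
  proof -
    fix j assume "j \<in> Y"
    hence "j - 1 \<in> D" "j \<ge> 1" using b by (auto simp: Y_def)
    thus "j \<notin> D" using nodd[OF nd, of "j - 1"] by (simp add: D_def)
  qed
  have T: "T = insert m (Y \<union> X)"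
    using YnD Dlt[of m] b by (auto simp: T_def Y_def X_def)
  have pkj: "\<And>j. j \<in> T \<Longrightarrow> pk (ins M xs j) + (if j - 1 \<in> D then 1 else 0) = p + (if j < m then 1 else 0)"
  proof -
    fix j assume jT: "j \<in> T"
    have "(2 \<le> j \<and> j - 1 \<in> D) = (j - 1 \<in> D)"
    proof (cases "j = 1")
      case True thus ?thesis using b jT by (auto simp: T_def D_def)
    next
      case False thus ?thesis using b jT by (auto simp: T_def)
    qed
    moreover have "0 < j" using jT b by (auto simp: T_def)
    ultimately show "pk (ins M xs j) + (if j - 1 \<in> D then 1 else 0) = p + (if j < m then 1 else 0)"
      using pk_ins[OF d nd _ _ lt, of j] jT m by (auto simp: T_def D_def p_def)
  qed
  have fX: "finite X" "finite Y" by (auto simp: X_def Y_def)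
  have mYX: "m \<notin> Y \<union> X" by (auto simp: Y_def X_def)
  have YX: "Y \<inter> X = {}" by (auto simp: Y_def X_def)
  have "{j\<in>T. pk (ins M xs j) = k} = (if k = p then insert m Y else {}) \<union> (if k = p + 1 then X else {})"
  proof (rule set_eqI)
    fix j
    show "j \<in> {j\<in>T. pk (ins M xs j) = k} \<longleftrightarrow> j \<in> (if k = p then insert m Y else {}) \<union> (if k = p + 1 then X else {})"
    proof (cases "j = m")
      case True
      have "m - 1 \<notin> D" using Dlt[of "m - 1"] b by auto
      thus ?thesis using True pkj[of m] T mYX by auto
    next
      case False
      show ?thesis
      proof (cases "j \<in> Y")
        case True thus ?thesis using pkj[of j] T YX by (auto simp: Y_def)
      next
        case nY: False
        show ?thesis
        proof (cases "j \<in> X")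
          case True thus ?thesis using nY pkj[of j] T by (auto simp: X_def)
        next
          case False thus ?thesis using nY \<open>j \<noteq> m\<close> T by auto
        qed
      qed
    qed
  qed
  hence cT: "card {j\<in>T. pk (ins M xs j) = k} = (if k = p then 1 + card Y else 0) + (if k = p + 1 then card X else 0)"
    using fX mYX YX by (auto simp: card_Un_disjoint)
  have cY: "card Y = card E"
  proof -
    have "Y = Suc ` E"
    proof (rule set_eqI)
      fix j
      show "j \<in> Y \<longleftrightarrow> j \<in> Suc ` E"
      proof
        assume jY: "j \<in> Y"
        hence j1: "j \<ge> 1" "j - 1 \<in> D" using b by (auto simp: Y_def)
        hence "j - 1 \<noteq> b - 1" using b by (auto simp: D_def)
        hence "j - 1 \<in> E" using j1 jY by (auto simp: E_def Y_def)
        moreover have "j = Suc (j - 1)" using j1 by simp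
        ultimately show "j \<in> Suc ` E" by (rule rev_image_eqI)
      next
        assume "j \<in> Suc ` E"
        then obtain i where i: "j = Suc i" "i \<in> D" "b \<le> i" by (auto simp: E_def)
        thus "j \<in> Y" using Dlt[of i] by (auto simp: Y_def)
      qed
    qed
    thus ?thesis by (simp add: card_image)
  qed
  have cX: "card X + 2 * card E + b = m"
  proof -
    have "{b..<m} = X \<union> Y \<union> E"
    proof (rule set_eqI)
      fix j
      show "j \<in> {b..<m} \<longleftrightarrow> j \<in> X \<union> Y \<union> E"
      proof
        assume "j \<in> {b..<m}"
        thus "j \<in> X \<union> Y \<union> E" unfolding X_def Y_def E_def by auto
      next
        assume j: "j \<in> X \<union> Y \<union> E"
        show "j \<in> {b..<m}"
        proof (cases "j \<in> E")
          case True thus ?thesis using Dlt[of j] by (auto simp: E_def)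
        next
          case False thus ?thesis using j by (auto simp: X_def Y_def)
        qed
      qed
    qed
    moreover have "finite E" by (simp add: E_def D_def)
    moreover have "X \<inter> Y = {}" by (auto simp: X_def Y_def)
    moreover have "(X \<union> Y) \<inter> E = {}" using YnD by (auto simp: X_def E_def)
    ultimately have "card {b..<m} = card X + card Y + card E"
      using fX by (simp add: card_Un_disjoint)
    thus ?thesis using cY b by simp
  qed
  have "{j. b \<le> j \<and> j \<le> m \<and> j \<notin> Dset xs \<and> pk (ins M xs j) = k} = {j\<in>T. pk (ins M xs j) = k}"
    by (auto simp: T_def D_def)
  thus ?thesis using cT cY cX unfolding E_def D_def p_def by auto
qed

lemma W_formulas:
  assumes xs: "xs \<in> RS m" and m2: "2 \<le> m"
  shows "int (card {j. j \<le> m \<and> j \<notin> Dset xs \<and> ins (Suc m) xs j ! 0 < ins (Suc m) xs j ! 1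
                     \<and> pk (ins (Suc m) xs j) = k}) =
      (if xs ! 0 < xs ! 1 \<and> des xs = k then int k + 1 else 0)
    + (if xs ! 0 < xs ! 1 \<and> des xs + 1 = k then int m + 1 - 2 * int k else 0)
    + (if xs ! 0 > xs ! 1 \<and> des xs = k then 1 else 0)"
  and "int (card {j. j \<le> m \<and> j \<notin> Dset xs \<and> ins (Suc m) xs j ! 0 > ins (Suc m) xs j ! 1
                     \<and> pk (ins (Suc m) xs j) = k}) =
      (if xs ! 0 < xs ! 1 \<and> des xs = k then 1 else 0)
    + (if xs ! 0 > xs ! 1 \<and> des xs = k + 1 then int k + 1 else 0)
    + (if xs ! 0 > xs ! 1 \<and> des xs = k then int m - 2 * int k else 0)"
proof -
  have m1: "m \<ge> 1" using m2 by simp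
  note p = RS_props[OF xs m1]
  have lt: "\<forall>x\<in>set xs. x < Suc m" using p by auto
  define D where "D = Dset xs"
  have dD: "des xs = card D" by (simp add: des_card D_def)
  have pkD: "pk xs = card (D - {0})" using pset_D[OF p(2) p(4)] by (simp add: pk_pset D_def)
  have fD: "finite D" by (simp add: D_def)
  have ne: "xs ! 0 \<noteq> xs ! 1" using p m2 by (simp add: nth_eq_iff_index_eq)
  define MI where "MI = {j. j \<le> m \<and> j \<notin> Dset xs \<and> ins (Suc m) xs j ! 0 < ins (Suc m) xs j ! 1
                     \<and> pk (ins (Suc m) xs j) = k}"
  define PL where "PL = {j. j \<le> m \<and> j \<notin> Dset xs \<and> ins (Suc m) xs j ! 0 > ins (Suc m) xs j ! 1
                     \<and> pk (ins (Suc m) xs j) = k}"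
  have sg: "\<And>j. j \<le> m \<Longrightarrow> (ins (Suc m) xs j ! 0 < ins (Suc m) xs j ! 1) \<longleftrightarrow> (j = 1 \<or> (2 \<le> j \<and> xs ! 0 < xs ! 1))"
     "\<And>j. j \<le> m \<Longrightarrow> (ins (Suc m) xs j ! 0 > ins (Suc m) xs j ! 1) \<longleftrightarrow> (j = 0 \<or> (2 \<le> j \<and> xs ! 0 > xs ! 1))"
    using sign_ins[of _ xs "Suc m"] p m2 lt by auto
  have pkI: "\<And>j. j \<le> m \<Longrightarrow> j \<notin> D \<Longrightarrow> pk (ins (Suc m) xs j) + (if 2 \<le> j \<and> j - 1 \<in> D then 1 else 0)
         = pk xs + (if 0 < j \<and> j < m then 1 else 0)"
    using pk_ins[OF p(2) p(4) _ _ lt] p(3) unfolding D_def by simp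
  have "int (card MI) = (if xs ! 0 < xs ! 1 \<and> des xs = k then int k + 1 else 0)
    + (if xs ! 0 < xs ! 1 \<and> des xs + 1 = k then int m + 1 - 2 * int k else 0)
    + (if xs ! 0 > xs ! 1 \<and> des xs = k then 1 else 0) \<and>
    int (card PL) = (if xs ! 0 < xs ! 1 \<and> des xs = k then 1 else 0)
    + (if xs ! 0 > xs ! 1 \<and> des xs = k + 1 then int k + 1 else 0)
    + (if xs ! 0 > xs ! 1 \<and> des xs = k then int m - 2 * int k else 0)"
  proof (cases "xs ! 0 < xs ! 1")
    case True
    have n0: "0 \<notin> D" using True by (auto simp: D_def Dset_def)
    have pkd: "pk xs = des xs" using pkD dD n0 by simp
    have e: "{i \<in> Dset xs. 1 \<le> i} = D" using n0 unfolding D_def by (auto simp: Suc_le_eq) (metis gr0I)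
    have "MI = {j. 1 \<le> j \<and> j \<le> m \<and> j \<notin> Dset xs \<and> pk (ins (Suc m) xs j) = k}"
      unfolding MI_def using sg(1) True by auto
    hence "int (card MI) = (if k = des xs then 1 + int (des xs) else 0)
       + (if k = des xs + 1 then int m - 1 - 2 * int (des xs) else 0)"
      using count_G[OF p(2) p(4) lt p(3), of 1 k] m2 n0 e pkd dD unfolding D_def by simp
    moreover have "PL = (if pk (ins (Suc m) xs 0) = k then {0} else {})"
      unfolding PL_def using sg(2) True ne n0 unfolding D_def by auto
    moreover have "pk (ins (Suc m) xs 0) = des xs" using pkI[of 0] n0 pkd by simp
    ultimately show ?thesis using True by auto
  next
    case False
    hence F: "xs ! 0 > xs ! 1" using ne by simp
    have i0: "0 \<in> D" using F m2 p by (auto simp: D_def Dset_def)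
    have n1: "1 \<notin> D" using nodd[OF p(4), of 0] i0 by (simp add: D_def)
    have d1: "des xs \<ge> 1" using i0 fD dD by (metis card_0_eq empty_iff less_one not_le)
    have pkd: "pk xs + 1 = des xs" using pkD dD i0 fD
      by (metis Suc_eq_plus1 card_Suc_Diff1)
    have e: "{i \<in> Dset xs. 2 \<le> i} = D - {0}" using n1 unfolding D_def
      by (auto simp: numeral_2_eq_2 Suc_le_eq) (metis One_nat_def Suc_lessI)
    have "PL = {j. 2 \<le> j \<and> j \<le> m \<and> j \<notin> Dset xs \<and> pk (ins (Suc m) xs j) = k}"
      unfolding PL_def using sg(2) F i0 unfolding D_def by auto
    hence "int (card PL) = (if k = pk xs then 1 + int (pk xs) else 0)
       + (if k = pk xs + 1 then int m - 2 - 2 * int (pk xs) else 0)"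
      using count_G[OF p(2) p(4) lt p(3), of 2 k] m2 n1 e pkD unfolding D_def by simp
    moreover have "MI = (if pk (ins (Suc m) xs 1) = k then {1} else {})"
      unfolding MI_def using sg(1) F m2 n1 unfolding D_def by auto
    moreover have "pk (ins (Suc m) xs 1) = des xs" using pkI[of 1] n1 pkd m2 by simp
    ultimately show ?thesis using F pkd by auto
  qed
  thus "int (card {j. j \<le> m \<and> j \<notin> Dset xs \<and> ins (Suc m) xs j ! 0 < ins (Suc m) xs j ! 1
                     \<and> pk (ins (Suc m) xs j) = k}) =
      (if xs ! 0 < xs ! 1 \<and> des xs = k then int k + 1 else 0)
    + (if xs ! 0 < xs ! 1 \<and> des xs + 1 = k then int m + 1 - 2 * int k else 0)
    + (if xs ! 0 > xs ! 1 \<and> des xs = k then 1 else 0)"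
  and "int (card {j. j \<le> m \<and> j \<notin> Dset xs \<and> ins (Suc m) xs j ! 0 > ins (Suc m) xs j ! 1
                     \<and> pk (ins (Suc m) xs j) = k}) =
      (if xs ! 0 < xs ! 1 \<and> des xs = k then 1 else 0)
    + (if xs ! 0 > xs ! 1 \<and> des xs = k + 1 then int k + 1 else 0)
    + (if xs ! 0 > xs ! 1 \<and> des xs = k then int m - 2 * int k else 0)"
    unfolding MI_def PL_def by auto
qed



lemma RS_fin[simp]: "finite (RS m)"
  by (rule finite_subset[of _ "permutations_of_set {1..m}"]) (auto simp: RS_def)

lemma card_split:
  assumes m: "m \<ge> 1"
  shows "card {s \<in> RS (Suc m). Q s} = (\<Sum>xs\<in>RS m. card {j. j \<le> m \<and> j \<notin> Dset xs \<and> Q (ins (Suc m) xs j)})"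
proof -
  define G where "G = (SIGMA xs:RS m. {j. j \<le> m \<and> j \<notin> Dset xs \<and> Q (ins (Suc m) xs j)})"
  have "{s \<in> RS (Suc m). Q s} = (\<lambda>(xs,j). ins (Suc m) xs j) ` G"
    unfolding G_def RS_Suc_eq[OF m] by auto
  moreover have "inj_on (\<lambda>(xs,j). ins (Suc m) xs j) G"
    by (rule inj_on_subset[OF ins_inj[OF m]]) (auto simp: G_def)
  ultimately have "card {s \<in> RS (Suc m). Q s} = card G" by (simp add: card_image)
  also have "\<dots> = (\<Sum>xs\<in>RS m. card {j. j \<le> m \<and> j \<notin> Dset xs \<and> Q (ins (Suc m) xs j)})"
    unfolding G_def by (rule card_SigmaI) auto
  finally show ?thesis .
qed

lemma sum_if_const:
  assumes "finite A"
  shows "(\<Sum>x\<in>A. if P x then (c::int) else 0) = c * int (card {x\<in>A. P x})"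
proof -
  have "(\<Sum>x\<in>A. if P x then c else 0) = (\<Sum>x\<in>{x\<in>A. P x}. c)"
    using sum.inter_filter[OF assms, of "\<lambda>_. c" P] by (rule sym)
  thus ?thesis by (simp add: mult.commute)
qed

lemma pk_des:
  assumes xs: "xs \<in> RS m" and m2: "2 \<le> m"
  shows "xs ! 0 < xs ! 1 \<Longrightarrow> pk xs = des xs" and "xs ! 0 > xs ! 1 \<Longrightarrow> pk xs + 1 = des xs"
proof -
  have m1: "m \<ge> 1" using m2 by simp
  note p = RS_props[OF xs m1]
  have pkD: "pk xs = card (Dset xs - {0})" using pset_D[OF p(2) p(4)] by (simp add: pk_pset)
  show "xs ! 0 < xs ! 1 \<Longrightarrow> pk xs = des xs"
  proof -
    assume "xs ! 0 < xs ! 1"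
    hence "0 \<notin> Dset xs" by (auto simp: Dset_def)
    thus ?thesis using pkD by (simp add: des_card)
  qed
  show "xs ! 0 > xs ! 1 \<Longrightarrow> pk xs + 1 = des xs"
  proof -
    assume "xs ! 0 > xs ! 1"
    hence "0 \<in> Dset xs" using p m2 by (auto simp: Dset_def)
    moreover have "card (Dset xs) > 0" using \<open>0 \<in> Dset xs\<close> by (auto simp: card_gt_0_iff)
    ultimately show ?thesis using pkD by (simp add: des_card)
  qed
qed

lemma recur:
  assumes m2: "2 \<le> m"
  defines "A \<equiv> \<lambda>k. card {xs\<in>RS m. xs ! 0 < xs ! 1 \<and> des xs = k}"
  defines "B \<equiv> \<lambda>k. card {xs\<in>RS m. xs ! 0 > xs ! 1 \<and> des xs = k}"
  defines "A' \<equiv> \<lambda>k. card {xs\<in>RS m. xs ! 0 < xs ! 1 \<and> des xs + 1 = k}"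
  shows "int (P_minus (Suc m) k) = (int k + 1) * int (A k) + (int m + 1 - 2 * int k) * int (A' k) + int (B k)"
    and "int (P_plus (Suc m) k) = int (A k) + (int k + 1) * int (B (k + 1)) + (int m - 2 * int k) * int (B k)"
proof -
  have m1: "m \<ge> 1" using m2 by simp
  have "P_minus (Suc m) k = card {s \<in> RS (Suc m). s ! 0 < s ! 1 \<and> pk s = k}"
    unfolding P_minus_def RS_minus_def by (rule arg_cong[where f = card]) auto
  also have "\<dots> = (\<Sum>xs\<in>RS m. card {j. j \<le> m \<and> j \<notin> Dset xs \<and> ins (Suc m) xs j ! 0 < ins (Suc m) xs j ! 1
                     \<and> pk (ins (Suc m) xs j) = k})"
    by (rule card_split[OF m1])
  finally have "int (P_minus (Suc m) k) = (\<Sum>xs\<in>RS m.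
      (if xs ! 0 < xs ! 1 \<and> des xs = k then int k + 1 else 0)
    + (if xs ! 0 < xs ! 1 \<and> des xs + 1 = k then int m + 1 - 2 * int k else 0)
    + (if xs ! 0 > xs ! 1 \<and> des xs = k then 1 else 0))"
    using W_formulas(1)[OF _ m2] by simp
  also have "\<dots> = (\<Sum>xs\<in>RS m. (if xs ! 0 < xs ! 1 \<and> des xs = k then int k + 1 else 0))
    + (\<Sum>xs\<in>RS m. (if xs ! 0 < xs ! 1 \<and> des xs + 1 = k then int m + 1 - 2 * int k else 0))
    + (\<Sum>xs\<in>RS m. (if xs ! 0 > xs ! 1 \<and> des xs = k then 1 else 0))"
    by (simp only: sum.distrib)
  also have "\<dots> = (int k + 1) * int (A k) + (int m + 1 - 2 * int k) * int (A' k) + 1 * int (B k)"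
    unfolding A_def A'_def B_def by (intro arg_cong2[where f = "(+)"] sum_if_const RS_fin)
  finally show "int (P_minus (Suc m) k) = (int k + 1) * int (A k) + (int m + 1 - 2 * int k) * int (A' k) + int (B k)"
    by simp
  have "P_plus (Suc m) k = card {s \<in> RS (Suc m). s ! 0 > s ! 1 \<and> pk s = k}"
    unfolding P_plus_def RS_plus_def by (rule arg_cong[where f = card]) auto
  also have "\<dots> = (\<Sum>xs\<in>RS m. card {j. j \<le> m \<and> j \<notin> Dset xs \<and> ins (Suc m) xs j ! 0 > ins (Suc m) xs j ! 1
                     \<and> pk (ins (Suc m) xs j) = k})"
    by (rule card_split[OF m1])
  finally have "int (P_plus (Suc m) k) = (\<Sum>xs\<in>RS m.
      (if xs ! 0 < xs ! 1 \<and> des xs = k then 1 else 0)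
    + (if xs ! 0 > xs ! 1 \<and> des xs = k + 1 then int k + 1 else 0)
    + (if xs ! 0 > xs ! 1 \<and> des xs = k then int m - 2 * int k else 0))"
    using W_formulas(2)[OF _ m2] by simp
  also have "\<dots> = (\<Sum>xs\<in>RS m. (if xs ! 0 < xs ! 1 \<and> des xs = k then 1 else 0))
    + (\<Sum>xs\<in>RS m. (if xs ! 0 > xs ! 1 \<and> des xs = k + 1 then int k + 1 else 0))
    + (\<Sum>xs\<in>RS m. (if xs ! 0 > xs ! 1 \<and> des xs = k then int m - 2 * int k else 0))"
    by (simp only: sum.distrib)
  also have "\<dots> = 1 * int (A k) + (int k + 1) * int (B (k + 1)) + (int m - 2 * int k) * int (B k)"
    unfolding A_def B_def by (intro arg_cong2[where f = "(+)"] sum_if_const RS_fin)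
  finally show "int (P_plus (Suc m) k) = int (A k) + (int k + 1) * int (B (k + 1)) + (int m - 2 * int k) * int (B k)"
    by simp
qed



lemma AB_facts:
  assumes m2: "2 \<le> m"
  shows "S m k = card {xs\<in>RS m. xs ! 0 < xs ! 1 \<and> des xs = k} + card {xs\<in>RS m. xs ! 0 > xs ! 1 \<and> des xs = k}"
    and "P_minus m k = card {xs\<in>RS m. xs ! 0 < xs ! 1 \<and> des xs = k}"
    and "P_plus m k = card {xs\<in>RS m. xs ! 0 > xs ! 1 \<and> des xs = k + 1}"
    and "card {xs\<in>RS m. xs ! 0 < xs ! 1 \<and> des xs + 1 = Suc k} = card {xs\<in>RS m. xs ! 0 < xs ! 1 \<and> des xs = k}"
    and "card {xs\<in>RS m. xs ! 0 < xs ! 1 \<and> des xs + 1 = 0} = 0"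
proof -
  have m1: "m \<ge> 1" using m2 by simp
  have ne: "\<And>xs. xs \<in> RS m \<Longrightarrow> xs ! 0 \<noteq> xs ! 1"
    using RS_props[OF _ m1] m2 by (simp add: nth_eq_iff_index_eq)
  have "{xs\<in>RS m. des xs = k} = {xs\<in>RS m. xs ! 0 < xs ! 1 \<and> des xs = k} \<union> {xs\<in>RS m. xs ! 0 > xs ! 1 \<and> des xs = k}"
    using ne by (auto simp: nat_neq_iff)
  moreover have "{xs\<in>RS m. xs ! 0 < xs ! 1 \<and> des xs = k} \<inter> {xs\<in>RS m. xs ! 0 > xs ! 1 \<and> des xs = k} = {}" by auto
  ultimately show "S m k = card {xs\<in>RS m. xs ! 0 < xs ! 1 \<and> des xs = k} + card {xs\<in>RS m. xs ! 0 > xs ! 1 \<and> des xs = k}"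
    unfolding S_def by (simp add: card_Un_disjoint)
  have "{xs \<in> RS_minus m. pk xs = k} = {xs\<in>RS m. xs ! 0 < xs ! 1 \<and> des xs = k}"
    using pk_des(1)[OF _ m2] by (auto simp: RS_minus_def)
  thus "P_minus m k = card {xs\<in>RS m. xs ! 0 < xs ! 1 \<and> des xs = k}" by (simp add: P_minus_def)
  have "{xs \<in> RS_plus m. pk xs = k} = {xs\<in>RS m. xs ! 0 > xs ! 1 \<and> des xs = k + 1}"
  proof (rule set_eqI)
    fix xs
    show "xs \<in> {xs \<in> RS_plus m. pk xs = k} \<longleftrightarrow> xs \<in> {xs\<in>RS m. xs ! 0 > xs ! 1 \<and> des xs = k + 1}"
    proof (cases "xs \<in> RS m \<and> xs ! 0 > xs ! 1")
      case True
      hence "pk xs + 1 = des xs" using pk_des(2)[OF _ m2] by blast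
      thus ?thesis using True by (auto simp: RS_plus_def)
    next
      case False thus ?thesis by (auto simp: RS_plus_def)
    qed
  qed
  thus "P_plus m k = card {xs\<in>RS m. xs ! 0 > xs ! 1 \<and> des xs = k + 1}" by (simp add: P_plus_def)
  show "card {xs\<in>RS m. xs ! 0 < xs ! 1 \<and> des xs + 1 = Suc k} = card {xs\<in>RS m. xs ! 0 < xs ! 1 \<and> des xs = k}"
    by simp
  show "card {xs\<in>RS m. xs ! 0 < xs ! 1 \<and> des xs + 1 = 0} = 0" by simp
qed

lemma short_nodd: "length xs \<le> 2 \<Longrightarrow> \<not> has_double_descent xs"
  by (auto simp: has_double_descent_def)

lemma RS1: "RS 1 = {[1]}"
proof -
  have "simsun 1 [1]" by (auto simp: simsun_def short_nodd)
  thus ?thesis by (auto simp: RS_def)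
qed

lemma RS2: "RS 2 = {[1,2],[2,1]}"
proof -
  have e: "{1..2::nat} = {1,2}" by auto
  have "simsun 2 [1,2]" "simsun 2 [2,1]"
    by (auto simp: simsun_def intro!: short_nodd order.trans[OF length_filter_le])
  thus ?thesis unfolding RS_def e by (auto simp: permutations_of_set_doubleton)
qed

lemma base_case:
  shows "int (P_plus 2 k) = (1 - 2 * int k) * int (S 1 k) \<and> int (P_minus 2 k) = (1 + int k) * int (S 1 k)"
proof -
  have d1: "des [1] = 0" by (simp add: des_def)
  have p12: "pk [1,2] = 0" "pk [2,1] = 0" by (auto simp: pk_def)
  have "{xs \<in> RS 1. des xs = k} = (if k = 0 then {[1]} else {})" unfolding RS1 using d1 by auto
  hence S1: "S 1 k = (if k = 0 then 1 else 0)" by (simp add: S_def)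
  have "RS_minus 2 = {[1,2]}" "RS_plus 2 = {[2,1]}" by (auto simp: RS_minus_def RS_plus_def RS2)
  hence "{xs \<in> RS_minus 2. pk xs = k} = (if k = 0 then {[1,2]} else {})"
     "{xs \<in> RS_plus 2. pk xs = k} = (if k = 0 then {[2,1]} else {})"
    using p12 by auto
  hence "P_minus 2 k = (if k = 0 then 1 else 0)" "P_plus 2 k = (if k = 0 then 1 else 0)"
    by (auto simp: P_minus_def P_plus_def)
  thus ?thesis using S1 by auto
qed

lemma main:
  assumes "n \<ge> 1"
  shows "\<forall>k. int (P_plus (n + 1) k) = (int n - 2 * int k) * int (S n k)
       \<and> int (P_minus (n + 1) k) = (1 + int k) * int (S n k)"
  using assms
proof (induction n rule: nat_induct_at_least)
  case base
  have e: "(1::nat) + 1 = 2" by simp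
  show ?case unfolding e
  proof (intro allI)
    fix k
    show "int (P_plus 2 k) = (int 1 - 2 * int k) * int (S 1 k) \<and> int (P_minus 2 k) = (1 + int k) * int (S 1 k)"
      unfolding of_nat_1 by (rule base_case)
  qed
next
  case (Suc n)
  define m where "m = n + 1"
  have m2: "2 \<le> m" using Suc m_def by simp
  define A where "A = (\<lambda>k. card {xs\<in>RS m. xs ! 0 < xs ! 1 \<and> des xs = k})"
  define B where "B = (\<lambda>k. card {xs\<in>RS m. xs ! 0 > xs ! 1 \<and> des xs = k})"
  define A' where "A' = (\<lambda>k. card {xs\<in>RS m. xs ! 0 < xs ! 1 \<and> des xs + 1 = k})"
  have IHA: "\<And>k. int (A k) = (1 + int k) * int (S n k)"
    using Suc.IH AB_facts(2)[OF m2] unfolding A_def m_def by metis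
  have IHB: "\<And>k. int (B (k + 1)) = (int n - 2 * int k) * int (S n k)"
    using Suc.IH AB_facts(3)[OF m2] unfolding B_def m_def by metis
  have Sm: "\<And>k. S m k = A k + B k" using AB_facts(1)[OF m2] unfolding A_def B_def by simp
  have A'0: "A' 0 = 0" using AB_facts(5)[OF m2] unfolding A'_def by simp
  have A'S: "\<And>k. A' (Suc k) = A k" using AB_facts(4)[OF m2] unfolding A'_def A_def by simp
  show ?case
  proof
    fix k
    have r1: "int (P_minus (Suc m) k) = (int k + 1) * int (A k) + (int m + 1 - 2 * int k) * int (A' k) + int (B k)"
      using recur(1)[OF m2] unfolding A_def B_def A'_def by simp
    have r2: "int (P_plus (Suc m) k) = int (A k) + (int k + 1) * int (B (k + 1)) + (int m - 2 * int k) * int (B k)"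
      using recur(2)[OF m2] unfolding A_def B_def by simp
    have k1: "(int m + 1 - 2 * int k) * int (A' k) = int k * int (B k)"
    proof (cases k)
      case 0 thus ?thesis using A'0 by simp
    next
      case (Suc k')
      have a: "int (A' k) = (1 + int k') * int (S n k')" using Suc A'S IHA[of k'] by simp
      have b: "int (B k) = (int n - 2 * int k') * int (S n k')" using Suc IHB[of k'] by simp
      have c: "int m + 1 - 2 * int k = int n - 2 * int k'" using Suc m_def by simp
      have d: "int k = 1 + int k'" using Suc by simp
      show ?thesis unfolding a b c by (simp add: d algebra_simps)
    qed
    have k2: "int (A k) + (int k + 1) * int (B (k + 1)) = (int m - 2 * int k) * int (A k)"
    proof -
      have mi: "int m = int n + 1" using m_def by simp
      show ?thesis unfolding IHA[of k] IHB[of k] mi by (simp add: algebra_simps)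
    qed
    show "int (P_plus (Suc n + 1) k) = (int (Suc n) - 2 * int k) * int (S (Suc n) k)
       \<and> int (P_minus (Suc n + 1) k) = (1 + int k) * int (S (Suc n) k)"
    proof
      have "int (P_plus (Suc m) k) = (int m - 2 * int k) * int (S m k)"
        using r2 k2 Sm[of k] by (simp add: algebra_simps)
      thus "int (P_plus (Suc n + 1) k) = (int (Suc n) - 2 * int k) * int (S (Suc n) k)"
        by (simp add: m_def)
      have "int (P_minus (Suc m) k) = (1 + int k) * int (S m k)"
        using r1 k1 Sm[of k] by (simp add: algebra_simps)
      thus "int (P_minus (Suc n + 1) k) = (1 + int k) * int (S (Suc n) k)"
        by (simp add: m_def)
    qed
  qed
qed

theorem lemma5:
  fixes n k :: nat
  assumes "n \<ge> 1"
  shows "int (P_plus (n + 1) k) = (int n - 2 * int k) * int (S n k)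
       \<and> P_minus (n + 1) k = (1 + k) * S n k"
proof -
  have "int (P_plus (n + 1) k) = (int n - 2 * int k) * int (S n k)
       \<and> int (P_minus (n + 1) k) = (1 + int k) * int (S n k)"
    using main[OF assms] by blast
  moreover have "int ((1 + k) * S n k) = (1 + int k) * int (S n k)" by (simp only: of_nat_mult of_nat_add of_nat_1)
  ultimately show ?thesis by (metis of_nat_eq_iff)
qed

end
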